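(* Consider the distributed detection model in the context with $N\ge 2$, and let $m=\frac{N}{2N-2}$. Suppose the fusion center uses the majority rule $K^*=\lceil\frac{N+1}{2}\rceil$ and that $\alpha<\min\{0.5-P_f,\;1-m/P_d\}$. Then the maximum of the error probability $P_E$ over $(P_{1,0},P_{0,1})\in[0,1]^2$ is attained at one of the attacking strategies $(P_{1,0},P_{0,1})=(1,0)$, $(0,1)$, or $(1,1)$.
   Context: Binary hypothesis test between $H_0$ and $H_1$ with priors $P_0,P_1\in(0,1)$, $P_0+P_1=1$. There are $N$ sensors; conditionally on the hypothesis, their local decisions $v_i\in\{0,1\}$ are i.i.d. with $P(v_i=1\mid H_1)=P_d$, $P(v_i=1\mid H_0)=P_f$, where $0<P_f<P_d<1$. Each sensor independently is Byzantine with probability $\alpha\in[0,1]$. Honest nodes send $u_i=v_i$; a Byzantine node sends $u_i=1$ with probability $P_{1,0}$ when $v_i=0$ and sends $u_i=0$ with probability $P_{0,1}$ when $v_i=1$. Hence conditionally on $H_j$ the $u_i$ are i.i.d. with $P(u_i=1\mid H_0)=\pi_{1,0}=\alpha(P_{1,0}(1-P_f)+(1-P_{0,1})P_f)+(1-\alpha)P_f$ and $P(u_i=1\mid H_1)=\pi_{1,1}=\alpha(P_{1,0}(1-P_d)+(1-P_{0,1})P_d)+(1-\alpha)P_d$. A $K$-out-of-$N$ fusion rule decides $H_1$ iff at least $K$ of the $u_i$ equal $1$; its global false alarm and detection probabilities are $Q_F=\sum_{i=K}^N\binom{N}{i}\pi_{1,0}^i(1-\pi_{1,0})^{N-i}$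 and $Q_D=\sum_{i=K}^N\binom{N}{i}\pi_{1,1}^i(1-\pi_{1,1})^{N-i}$, and its error probability is $P_E=P_0Q_F+P_1(1-Q_D)$, viewed as a function of $(P_{1,0},P_{0,1})$ for fixed $\alpha$ and $K$. *)

theory Defs
  imports Complex_Main
begin

text \<open>Probability that a transmitted bit u_i equals 1 given the local probability
  p = P(v_i = 1 | H_j) (p = P_f under H_0, p = P_d under H_1).\<close>
definition pi1 :: "real \<Rightarrow> real \<Rightarrow> real \<Rightarrow> real \<Rightarrow> real" where
  "pi1 \<alpha> P10 P01 p = \<alpha> * (P10 * (1 - p) + (1 - P01) * p) + (1 - \<alpha>) * p"

definition kofn :: "nat \<Rightarrow> nat \<Rightarrow> real \<Rightarrow> real" where
  "kofn N K q = (\<Sum>i = K..N. real (N choose i) * q ^ i * (1 - q) ^ (N - i))"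

definition QF :: "nat \<Rightarrow> nat \<Rightarrow> real \<Rightarrow> real \<Rightarrow> real \<Rightarrow> real \<Rightarrow> real" where
  "QF N K \<alpha> Pf P10 P01 = kofn N K (pi1 \<alpha> P10 P01 Pf)"

definition QD :: "nat \<Rightarrow> nat \<Rightarrow> real \<Rightarrow> real \<Rightarrow> real \<Rightarrow> real \<Rightarrow> real" where
  "QD N K \<alpha> Pd P10 P01 = kofn N K (pi1 \<alpha> P10 P01 Pd)"

definition PE :: "nat \<Rightarrow> nat \<Rightarrow> real \<Rightarrow> real \<Rightarrow> real \<Rightarrow> real \<Rightarrow> real \<Rightarrow> real \<Rightarrow> real \<Rightarrow> real" where
  "PE N K \<alpha> P0 P1 Pf Pd P10 P01 =
     P0 * QF N K \<alpha> Pf P10 P01 + P1 * (1 - QD N K \<alpha> Pd P10 P01)"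

end

theory Submission
  imports Defs "HOL-Analysis.Analysis"
begin

lemma kofn_step:
  assumes "K < N"
  shows "kofn N K q = real (N choose K) * q^K * (1-q)^(N-K) + kofn N (Suc K) q"
  unfolding kofn_def using assms by (simp add: sum.atLeast_Suc_atMost)

lemma kofn_deriv:
  assumes "1 \<le> K" "K \<le> N"
  shows "(kofn N K has_real_derivative
           (real N * real ((N-1) choose (K-1)) * q^(K-1) * (1-q)^(N-K))) (at q)"
  using assms(2,1)
proof (induction K rule: inc_induct)
  case base
  have e: "kofn N N = (\<lambda>q. q^N)" by (rule ext) (simp add: kofn_def)
  show ?case unfolding e by (auto intro!: derivative_eq_intros)
next
  case (step n)
  obtain k where k: "n = Suc k" using step by (cases n) auto
  obtain r where r: "N - n = Suc r" using step by (cases "N - n") auto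
  have IH: "(kofn N (Suc n) has_real_derivative
           (real N * real ((N-1) choose n) * q^n * (1-q)^r)) (at q)"
  proof -
    have "N - Suc n = r" using r by arith
    then show ?thesis using step by simp
  qed
  have e: "kofn N n = (\<lambda>q. real (N choose n) * q^(Suc k) * (1-q)^(Suc r) + kofn N (Suc n) q)"
    by (rule ext, subst kofn_step[OF step(2)], simp add: r k[symmetric])
  have T: "((\<lambda>q. real (N choose n) * q^(Suc k) * (1-q)^(Suc r)) has_real_derivative
      real (N choose n) * (real n * q^k * (1-q)^(Suc r) - real (Suc r) * q^n * (1-q)^r)) (at q)"
    by (auto intro!: derivative_eq_intros simp del: power_Suc simp: k algebra_simps)
  have i1: "real n * real (N choose n) = real N * real ((N-1) choose k)"
    using times_binomial_minus1_eq[of n N] k by (metis of_nat_mult diff_Suc_1 zero_less_Suc)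
  have i2: "real (Suc r) * real (N choose n) = real N * real ((N-1) choose n)"
    using binomial_absorb_comp[of N n] r by (metis of_nat_mult)
  have "(kofn N n has_real_derivative
      real (N choose n) * (real n * q^k * (1-q)^(Suc r) - real (Suc r) * q^n * (1-q)^r)
      + real N * real ((N-1) choose n) * q^n * (1-q)^r) (at q)"
    unfolding e by (rule DERIV_add[OF T IH])
  moreover have "real (N choose n) * (real n * q^k * (1-q)^(Suc r) - real (Suc r) * q^n * (1-q)^r)
      + real N * real ((N-1) choose n) * q^n * (1-q)^r
      = real N * real ((N-1) choose (n-1)) * q^(n-1) * (1-q)^(N-n)"
  proof -
    have "real (N choose n) * (real n * q^k * (1-q)^(Suc r) - real (Suc r) * q^n * (1-q)^r)
       = (real n * real (N choose n)) * q^k * (1-q)^(Suc r) - (real (Suc r) * real (N choose n)) * q^n * (1-q)^r"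
      by (simp add: algebra_simps)
    also have "\<dots> = real N * real ((N-1) choose k) * q^k * (1-q)^(Suc r) - real N * real ((N-1) choose n) * q^n * (1-q)^r"
      by (simp only: i1 i2)
    finally have X: "real (N choose n) * (real n * q^k * (1-q)^(Suc r) - real (Suc r) * q^n * (1-q)^r)
      + real N * real ((N-1) choose n) * q^n * (1-q)^r = real N * real ((N-1) choose k) * q^k * (1-q)^(Suc r)"
      by simp
    have "n - 1 = k" "N - n = Suc r" using k r by auto
    then show ?thesis using X by simp
  qed
  ultimately show ?case by simp
qed
lemma h_mono:
  fixes a b :: nat and x y :: real
  assumes "b \<le> a" "0 \<le> x" "x \<le> y" "y \<le> 1/2"
  shows "x^Suc a * (1-x)^Suc b \<le> y^Suc a * (1-y)^Suc b"
proof (rule DERIV_nonneg_imp_nondecreasing[OF assms(3)])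
  fix t assume t: "x \<le> t" "t \<le> y"
  have d: "((\<lambda>t. t^Suc a * (1-t)^Suc b) has_real_derivative
     t^a * (1-t)^b * (real (Suc a) * (1-t) - real (Suc b) * t)) (at t)"
    by (auto intro!: derivative_eq_intros simp del: power_Suc) (simp add: algebra_simps)
  have "0 \<le> t" "t \<le> 1 - t" using t assms by auto
  have "real (Suc b) * t \<le> real (Suc a) * t" using \<open>0 \<le> t\<close> assms(1) by (intro mult_right_mono) auto
  also have "\<dots> \<le> real (Suc a) * (1-t)" using \<open>t \<le> 1 - t\<close> by (intro mult_left_mono) auto
  finally have "0 \<le> t^a * (1-t)^b * (real (Suc a) * (1-t) - real (Suc b) * t)"
    using \<open>0 \<le> t\<close> \<open>t \<le> 1 - t\<close> by (intro mult_nonneg_nonneg) auto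
  with d show "\<exists>y. ((\<lambda>t. t^Suc a * (1-t)^Suc b) has_real_derivative y) (at t) \<and> 0 \<le> y" by blast
qed

lemma h_anti:
  fixes a b :: nat and x y m :: real
  assumes "real (Suc a) * (1-m) \<le> real (Suc b) * m" "0 \<le> m" "m \<le> x" "x \<le> y" "y \<le> 1"
  shows "y^Suc a * (1-y)^Suc b \<le> x^Suc a * (1-x)^Suc b"
proof -
  have "- (x^Suc a * (1-x)^Suc b) \<le> - (y^Suc a * (1-y)^Suc b)"
  proof (rule DERIV_nonneg_imp_nondecreasing[OF assms(4)])
    fix t assume t: "x \<le> t" "t \<le> y"
    have d: "((\<lambda>t. - (t^Suc a * (1-t)^Suc b)) has_real_derivative
       t^a * (1-t)^b * (real (Suc b) * t - real (Suc a) * (1-t))) (at t)"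
      by (auto intro!: derivative_eq_intros simp del: power_Suc) (simp add: algebra_simps)
    have "0 \<le> t" "t \<le> 1" "m \<le> t" using t assms by auto
    have "real (Suc a) * (1-t) \<le> real (Suc a) * (1-m)" using \<open>m \<le> t\<close> by (intro mult_left_mono) auto
    also have "\<dots> \<le> real (Suc b) * m" by fact
    also have "\<dots> \<le> real (Suc b) * t" using \<open>m \<le> t\<close> by (intro mult_left_mono) auto
    finally have "0 \<le> t^a * (1-t)^b * (real (Suc b) * t - real (Suc a) * (1-t))"
      using \<open>0 \<le> t\<close> \<open>t \<le> 1\<close> by (intro mult_nonneg_nonneg) auto
    with d show "\<exists>y. ((\<lambda>t. - (t^Suc a * (1-t)^Suc b)) has_real_derivative y) (at t) \<and> 0 \<le> y" by blast
  qed
  then show ?thesis by simp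
qed

lemma comb_le:
  fixes A B M t :: real
  assumes "A \<le> M" "B \<le> M" "0 \<le> t" "t \<le> 1"
  shows "(1-t)*A + t*B \<le> M"
proof -
  have "(1-t)*A \<le> (1-t)*M" using assms by (intro mult_left_mono) auto
  moreover have "t*B \<le> t*M" using assms by (intro mult_left_mono) auto
  ultimately show ?thesis by (simp add: algebra_simps)
qed

theorem theorem2:
  fixes N :: nat and \<alpha> P0 P1 Pf Pd :: real
  assumes "N \<ge> 2"
    and "0 < P0" and "P0 < 1" and "0 < P1" and "P1 < 1" and "P0 + P1 = 1"
    and "0 < Pf" and "Pf < Pd" and "Pd < 1"
    and "0 \<le> \<alpha>" and "\<alpha> \<le> 1"
    and "\<alpha> < min (1/2 - Pf) (1 - (real N / (2 * real N - 2)) / Pd)"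
  shows "\<exists>s \<in> {(1, 0), (0, 1), (1, 1)}.
           \<forall>P10 \<in> {0..1}. \<forall>P01 \<in> {0..1}.
             PE N (nat \<lceil>(real N + 1) / 2\<rceil>) \<alpha> P0 P1 Pf Pd P10 P01
               \<le> PE N (nat \<lceil>(real N + 1) / 2\<rceil>) \<alpha> P0 P1 Pf Pd (fst s) (snd s)"
proof -
  define K where "K = nat \<lceil>(real N + 1) / 2\<rceil>"
  define m where "m = real N / (2 * real N - 2)"
  define F where "F = kofn N K"
  define G where "G = (\<lambda>x y. PE N K \<alpha> P0 P1 Pf Pd x y)"
  have a1: "\<alpha> < 1/2 - Pf" and a2: "\<alpha> < 1 - m / Pd" using assms(12) unfolding m_def by auto
  have aPd: "\<alpha> * Pd < Pd - m"
  proof -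
    have "\<alpha> * Pd < (1 - m / Pd) * Pd" using a2 assms by (intro mult_strict_right_mono) auto
    also have "\<dots> = Pd - m" using assms by (simp add: field_simps)
    finally show ?thesis .
  qed
  have "0 \<le> \<alpha> * Pd" using assms by simp
  then have mPd: "m < Pd" using aPd by linarith
  have N3: "N \<ge> 3"
  proof (rule ccontr)
    assume "\<not> N \<ge> 3"
    then have "N = 2" using assms by auto
    then have "m = 1" by (simp add: m_def)
    then show False using mPd assms by auto
  qed
  have Kr: "real K = real_of_int \<lceil>(real N + 1) / 2\<rceil>"
  proof -
    have "0 \<le> \<lceil>(real N + 1) / 2\<rceil>" by (simp add: ceiling_le_zero)
    then show ?thesis unfolding K_def by simp
  qed
  have "(real N + 1)/2 \<le> real K" using Kr le_of_int_ceiling[of "(real N + 1)/2"] by simp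
  then have K1: "real N + 1 \<le> 2 * real K" by (simp add: field_simps)
  have "real K < (real N + 1)/2 + 1" using Kr ceiling_correct[of "(real N + 1)/2"] by (simp add: field_simps)
  then have K2: "2 * real K < real N + 3" by (simp add: field_simps)
  have K1n: "N + 1 \<le> 2 * K" using K1 by linarith
  have K2n: "2 * K \<le> N + 2" using K2 by linarith
  have "2 \<le> K" using K1n N3 by linarith
  then obtain a where a: "K - 1 = Suc a" by (intro that[of "K - 2"]) arith
  have "K < N" using K2n N3 by linarith
  then obtain b where b: "N - K = Suc b" by (intro that[of "N - K - 1"]) arith
  have ba: "b \<le> a" using a b K1n by linarith
  have K1': "1 \<le> K" "K \<le> N" using a b by auto
  define c where "c = real N * real ((N-1) choose (K-1))"
  have c0: "0 \<le> c" unfolding c_def by simp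
  have dF: "\<And>q. (F has_real_derivative c * (q^Suc a * (1-q)^Suc b)) (at q)"
    using kofn_deriv[OF K1'] a b unfolding F_def c_def by (metis mult.assoc)
  have m0: "0 \<le> m" unfolding m_def using assms by simp
  have mcond: "real (Suc a) * (1-m) \<le> real (Suc b) * m"
  proof -
    have ra: "real (Suc a) = real K - 1" using a K1' by (metis of_nat_1 of_nat_diff)
    have rb: "real (Suc b) = real N - real K" using b K1' by (metis of_nat_diff)
    have nn: "2 * real N - 2 > 0" using N3 by simp
    have p: "0 \<le> (real N - 1) * (real N + 2 - 2 * real K)" using K2n N3 by (intro mult_nonneg_nonneg) linarith+
    have e1: "1 - m = (real N - 2) / (2 * real N - 2)" unfolding m_def using nn by (simp add: field_simps)
    have q: "(real K - 1) * (real N - 2) \<le> (real N - real K) * real N"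
    proof -
      have "(real N - real K) * real N - (real K - 1) * (real N - 2) = (real N - 1) * (real N + 2 - 2 * real K)"
        by (simp add: algebra_simps)
      then show ?thesis using p by linarith
    qed
    have "real (Suc a) * (1-m) = (real K - 1) * (real N - 2) / (2 * real N - 2)" unfolding ra e1 by simp
    also have "\<dots> \<le> (real N - real K) * real N / (2 * real N - 2)" using q nn by (intro divide_right_mono) auto
    also have "\<dots> = real (Suc b) * m" unfolding rb m_def by simp
    finally show ?thesis .
  qed
  have convF: "convex_on {0..1/2} F"
  proof (rule convex_on_realI[where f'="\<lambda>q. c * (q^Suc a * (1-q)^Suc b)"])
    show "connected {0..1/2::real}" by simp
    show "\<And>x. x \<in> {0..1/2} \<Longrightarrow> (F has_real_derivative c * (x^Suc a * (1-x)^Suc b)) (at x)" using dF by blast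
    show "\<And>x y. x \<in> {0..1/2} \<Longrightarrow> y \<in> {0..1/2} \<Longrightarrow> x \<le> y \<Longrightarrow> c * (x^Suc a * (1-x)^Suc b) \<le> c * (y^Suc a * (1-y)^Suc b)"
      using h_mono[OF ba] c0 by (intro mult_left_mono) auto
  qed
  have concF: "convex_on {m..1} (\<lambda>q. - F q)"
  proof (rule convex_on_realI[where f'="\<lambda>q. - (c * (q^Suc a * (1-q)^Suc b))"])
    show "connected {m..1::real}" by simp
    show "\<And>x. x \<in> {m..1} \<Longrightarrow> ((\<lambda>q. - F q) has_real_derivative - (c * (x^Suc a * (1-x)^Suc b))) (at x)"
      using dF by (intro DERIV_minus) blast
    show "\<And>x y. x \<in> {m..1} \<Longrightarrow> y \<in> {m..1} \<Longrightarrow> x \<le> y \<Longrightarrow> - (c * (x^Suc a * (1-x)^Suc b)) \<le> - (c * (y^Suc a * (1-y)^Suc b))"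
      using h_anti[OF mcond m0] c0 by (simp add: mult_left_mono)
  qed
  have monoF: "\<And>x y. 0 \<le> x \<Longrightarrow> x \<le> y \<Longrightarrow> y \<le> 1 \<Longrightarrow> F x \<le> F y"
  proof -
    fix x y :: real assume xy: "0 \<le> x" "x \<le> y" "y \<le> 1"
    show "F x \<le> F y"
    proof (rule DERIV_nonneg_imp_nondecreasing[OF xy(2)])
      fix t assume "x \<le> t" "t \<le> y"
      then have "0 \<le> c * (t^Suc a * (1-t)^Suc b)" using xy c0 by simp
      then show "\<exists>z. (F has_real_derivative z) (at t) \<and> 0 \<le> z" using dF by blast
    qed
  qed
  have r0: "\<And>x y. x \<in> {0..1} \<Longrightarrow> y \<in> {0..1} \<Longrightarrow> pi1 \<alpha> x y Pf \<in> {0..1/2}"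
  proof -
    fix x y :: real assume "x \<in> {0..1}" "y \<in> {0..1}"
    then have h: "0 \<le> x" "x \<le> 1" "0 \<le> y" "y \<le> 1" by auto
    have e: "pi1 \<alpha> x y Pf = Pf + \<alpha> * x * (1 - Pf) - \<alpha> * y * Pf" by (simp add: pi1_def algebra_simps)
    have "0 \<le> \<alpha> * x * (1 - Pf)" using h assms by simp
    moreover have "\<alpha> * x * (1 - Pf) \<le> \<alpha>"
    proof -
      have "\<alpha> * x * (1 - Pf) \<le> \<alpha> * x" using h assms by (intro mult_right_le_one_le) auto
      also have "\<dots> \<le> \<alpha>" using h assms by (intro mult_right_le_one_le) auto
      finally show ?thesis .
    qed
    moreover have "0 \<le> \<alpha> * y * Pf" using h assms by simp
    moreover have "\<alpha> * y * Pf \<le> \<alpha> * Pf"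
    proof -
      have "\<alpha> * y \<le> \<alpha>" using h assms by (intro mult_right_le_one_le) auto
      then show ?thesis using assms by (intro mult_right_mono) auto
    qed
    moreover have "0 \<le> \<alpha> * Pf" using assms by simp
    moreover have "\<alpha> * Pf \<le> Pf" using assms by (simp add: mult_right_le_one_le mult.commute)
    ultimately show "pi1 \<alpha> x y Pf \<in> {0..1/2}" unfolding e using a1 by auto
  qed
  have r1: "\<And>x y. x \<in> {0..1} \<Longrightarrow> y \<in> {0..1} \<Longrightarrow> pi1 \<alpha> x y Pd \<in> {m..1}"
  proof -
    fix x y :: real assume "x \<in> {0..1}" "y \<in> {0..1}"
    then have h: "0 \<le> x" "x \<le> 1" "0 \<le> y" "y \<le> 1" by auto
    have e: "pi1 \<alpha> x y Pd = Pd + \<alpha> * x * (1 - Pd) - \<alpha> * y * Pd" by (simp add: pi1_def algebra_simps)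
    have "0 \<le> \<alpha> * x * (1 - Pd)" using h assms by simp
    moreover have "\<alpha> * x * (1 - Pd) \<le> 1 - Pd"
    proof -
      have "\<alpha> * x \<le> \<alpha>" using h assms by (intro mult_right_le_one_le) auto
      then show ?thesis using h assms by (intro mult_left_le_one_le) auto
    qed
    moreover have "\<alpha> * y * Pd \<le> \<alpha> * Pd"
    proof -
      have "\<alpha> * y \<le> \<alpha>" using h assms by (intro mult_right_le_one_le) auto
      then show ?thesis using assms by (intro mult_right_mono) auto
    qed
    moreover have "0 \<le> \<alpha> * y * Pd" using h assms by simp
    ultimately show "pi1 \<alpha> x y Pd \<in> {m..1}" unfolding e using aPd by auto
  qed
  have Geq: "\<And>x y. G x y = P0 * F (pi1 \<alpha> x y Pf) + P1 * (1 - F (pi1 \<alpha> x y Pd))"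
    unfolding G_def PE_def QF_def QD_def F_def by simp
  have aff: "\<And>x y x' y' t p. pi1 \<alpha> ((1-t)*x + t*x') ((1-t)*y + t*y') p = (1-t) * pi1 \<alpha> x y p + t * pi1 \<alpha> x' y' p"
    by (simp add: pi1_def algebra_simps)
  have comb: "\<And>x y x' y' t. x \<in> {0..1} \<Longrightarrow> y \<in> {0..1} \<Longrightarrow> x' \<in> {0..1} \<Longrightarrow> y' \<in> {0..1} \<Longrightarrow> 0 \<le> t \<Longrightarrow> t \<le> 1 \<Longrightarrow>
      G ((1-t)*x + t*x') ((1-t)*y + t*y') \<le> (1-t) * G x y + t * G x' y'"
  proof -
    fix x y x' y' t :: real
    assume h: "x \<in> {0..1}" "y \<in> {0..1}" "x' \<in> {0..1}" "y' \<in> {0..1}" "0 \<le> t" "t \<le> 1"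
    have c1: "F ((1-t) * pi1 \<alpha> x y Pf + t * pi1 \<alpha> x' y' Pf) \<le> (1-t) * F (pi1 \<alpha> x y Pf) + t * F (pi1 \<alpha> x' y' Pf)"
      using convex_onD[OF convF, of t "pi1 \<alpha> x y Pf" "pi1 \<alpha> x' y' Pf"] r0 h by simp
    have c2: "- F ((1-t) * pi1 \<alpha> x y Pd + t * pi1 \<alpha> x' y' Pd) \<le> (1-t) * (- F (pi1 \<alpha> x y Pd)) + t * (- F (pi1 \<alpha> x' y' Pd))"
      using convex_onD[OF concF, of t "pi1 \<alpha> x y Pd" "pi1 \<alpha> x' y' Pd"] r1 h by simp
    have d1: "P0 * F ((1-t) * pi1 \<alpha> x y Pf + t * pi1 \<alpha> x' y' Pf) \<le> P0 * ((1-t) * F (pi1 \<alpha> x y Pf) + t * F (pi1 \<alpha> x' y' Pf))"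
      using c1 assms by (intro mult_left_mono) auto
    have d2: "P1 * (- F ((1-t) * pi1 \<alpha> x y Pd + t * pi1 \<alpha> x' y' Pd)) \<le> P1 * ((1-t) * (- F (pi1 \<alpha> x y Pd)) + t * (- F (pi1 \<alpha> x' y' Pd)))"
      using c2 assms by (intro mult_left_mono) auto
    show "G ((1-t)*x + t*x') ((1-t)*y + t*y') \<le> (1-t) * G x y + t * G x' y'"
      unfolding Geq aff using d1 d2 by (simp add: algebra_simps)
  qed
  have G00: "G 0 0 \<le> G 1 1"
  proof -
    have p00: "pi1 \<alpha> 0 0 Pf = Pf" "pi1 \<alpha> 0 0 Pd = Pd" by (simp_all add: pi1_def algebra_simps)
    have p11: "pi1 \<alpha> 1 1 Pf = Pf + \<alpha> * (1 - 2 * Pf)" "pi1 \<alpha> 1 1 Pd = Pd + \<alpha> * (1 - 2 * Pd)"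
      by (simp_all add: pi1_def algebra_simps)
    have m12: "1/2 \<le> m" unfolding m_def using N3 by (simp add: field_simps)
    have "F Pf \<le> F (Pf + \<alpha> * (1 - 2 * Pf))"
      using r0[of 1 1] p11 assms a1 by (intro monoF) auto
    moreover have "F (Pd + \<alpha> * (1 - 2 * Pd)) \<le> F Pd"
    proof (rule monoF)
      show "0 \<le> Pd + \<alpha> * (1 - 2 * Pd)" using r1[of 1 1] p11 m0 by auto
      show "Pd + \<alpha> * (1 - 2 * Pd) \<le> Pd" using m12 mPd assms by (simp add: mult_nonneg_nonpos)
      show "Pd \<le> 1" using assms by simp
    qed
    ultimately have "P0 * F Pf \<le> P0 * F (Pf + \<alpha> * (1 - 2 * Pf))"
        "P1 * (1 - F Pd) \<le> P1 * (1 - F (Pd + \<alpha> * (1 - 2 * Pd)))"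
      using assms by (auto intro!: mult_left_mono)
    then show ?thesis unfolding Geq p00 p11 by linarith
  qed
  define M where "M = max (G 1 0) (max (G 0 1) (G 1 1))"
  have bound: "\<And>x y. x \<in> {0..1} \<Longrightarrow> y \<in> {0..1} \<Longrightarrow> G x y \<le> M"
  proof -
    fix x y :: real assume h: "x \<in> {0..1}" "y \<in> {0..1}"
    have g0: "G 0 y \<le> M"
    proof -
      have "G 0 y \<le> (1-y) * G 0 0 + y * G 0 1" using comb[of 0 0 0 1 y] h by simp
      also have "\<dots> \<le> M" using h G00 by (intro comb_le) (auto simp: M_def)
      finally show ?thesis .
    qed
    have g1: "G 1 y \<le> M"
    proof -
      have "G 1 y \<le> (1-y) * G 1 0 + y * G 1 1" using comb[of 1 0 1 1 y] h by simp
      also have "\<dots> \<le> M" using h by (intro comb_le) (auto simp: M_def)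
      finally show ?thesis .
    qed
    have "G x y \<le> (1-x) * G 0 y + x * G 1 y" using comb[of 0 y 1 y x] h by (simp add: algebra_simps)
    also have "\<dots> \<le> M" using h g0 g1 by (intro comb_le) auto
    finally show "G x y \<le> M" .
  qed
  have "\<exists>s \<in> {(1, 0), (0, 1), (1, 1)}. G (fst s) (snd s) = M"
    unfolding M_def by (auto simp: max_def)
  then obtain s where s: "s \<in> {(1, 0), (0, 1), (1, 1)}" "G (fst s) (snd s) = M" by blast
  show ?thesis
    using s bound unfolding G_def K_def by (intro bexI[of _ s]) auto
qed

end
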